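(* Let $p_n\to\infty$, for each $n$ let $u_{p_n}\in K_{p_n}$ be nonnegative with $Q(u_{p_n})=J_{p_n}$, and suppose $u_\infty\in H^1_r(B_1)$ is such that $u_{p_n}\rightharpoonup u_\infty$ weakly in $H^1(B_1)$, $u_{p_n}\to u_\infty$ in $L^q(B_1)$ for all $q<\infty$, and $u_{p_n}\to u_\infty$ in $L^\infty(A)$, where $A=B_{R_2}\setminus B_{R_1}$. Then $\|u_\infty\|_{L^\infty(A)}=1$.
   Context: Let $n\ge2$, $B_1\subset\mathbb{R}^n$ the open unit ball, $B_R$ the ball of radius $R$ centered at the origin, and $V(|x|)\ge0$, $V\not\equiv0$, a smooth radial function on $B_1$. Let $G$ be the Neumann Green function: for $s\in(0,1)$, $-\partial_r^2G(r,s)-\frac{n-1}{r}\partial_rG(r,s)+V(r)G(r,s)=\delta_s$ in distributions on $(0,1)$ (Dirac mass w.r.t. $dr$), $\partial_rG(0,s)=\partial_rG(1,s)=0$. Let $F(r)=|\partial B_1|\,r^{n-1}/G(r,r)$. Let $\bar r\in(0,1)$ be a local minimum point of $F$, and fix $0<R_1<\bar r<R_2<1$ such that $\bar r$ is a global minimum point of $F$ on $[R_1,R_2]$; fix $c$ with $\max\{G(R_1,\bar r)/G(\bar r,\bar r),\,G(R_2,\bar r)/G(\bar r,\bar r)\}<c<1$. Let $H^1_r(B_1)=\{u\in H^1(B_1): u \text{ radial}\}$, $Q(u)=\int_{B_1}(|\nabla u|^2+V(|x|)u^2)$, and for $p>1$ $$K_p=\Big\{u\in H^1_r(B_1):\ \Big(|B_1|^{-1}\int_{B_1}|u|^{p+1}\Big)^{\frac1{p+1}}=1,\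 |u|\le c \text{ in } B_{R_1}\cup(B_1\setminus B_{R_2})\Big\},\qquad J_p=\inf\{Q(u):u\in K_p\}.$$ *)

theory Defs
  imports "HOL-Analysis.Analysis" "HOL-Probability.Essential_Supremum"
begin

definition smooth_real_on :: "real set \<Rightarrow> (real \<Rightarrow> real) \<Rightarrow> bool" where
  "smooth_real_on S f \<longleftrightarrow> (\<forall>k. \<forall>x\<in>S. (deriv ^^ k) f differentiable (at x))"

(* Neumann Green function G(r,s) on (0,1) for
   -g'' - (n-1)/r g' + V g = delta_s,  g'(0) = g'(1) = 0,
   in classical (piecewise) form: continuous on [0,1], solves the ODE on (0,s) and (s,1),
   one-sided derivatives with jump  g'(s-) - g'(s+) = 1, Neumann conditions at 0 and 1. *)
definition neumann_green :: "nat \<Rightarrow> (real \<Rightarrow> real) \<Rightarrow> (real \<Rightarrow> real \<Rightarrow> real) \<Rightarrow> bool" where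
  "neumann_green n V G \<longleftrightarrow>
     (\<forall>s\<in>{0<..<1}. \<exists>g1 g2.
        continuous_on {0..1} (\<lambda>r. G r s) \<and>
        (\<forall>r\<in>{0..s}. ((\<lambda>r. G r s) has_real_derivative g1 r) (at r within {0..s})) \<and>
        (\<forall>r\<in>{s..1}. ((\<lambda>r. G r s) has_real_derivative g2 r) (at r within {s..1})) \<and>
        (\<forall>r\<in>{0<..<s}. \<exists>d. (g1 has_real_derivative d) (at r) \<and>
              - d - (real n - 1) / r * g1 r + V r * G r s = 0) \<and>
        (\<forall>r\<in>{s<..<1}. \<exists>d. (g2 has_real_derivative d) (at r) \<and>
              - d - (real n - 1) / r * g2 r + V r * G r s = 0) \<and>
        g1 0 = 0 \<and> g2 1 = 0 \<and> g1 s - g2 s = 1)"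

definition unit_ball :: "'a::euclidean_space set" where
  "unit_ball = ball 0 1"

definition test_fun :: "('a::euclidean_space \<Rightarrow> real) \<Rightarrow> ('a \<Rightarrow> 'a) \<Rightarrow> bool" where
  "test_fun phi dphi \<longleftrightarrow>
     (\<forall>x. (phi has_derivative (\<lambda>h. dphi x \<bullet> h)) (at x)) \<and> continuous_on UNIV dphi \<and>
     compact (closure {x. phi x \<noteq> 0}) \<and> closure {x. phi x \<noteq> 0} \<subseteq> unit_ball"

definition weak_grad :: "('a::euclidean_space \<Rightarrow> real) \<Rightarrow> ('a \<Rightarrow> 'a) \<Rightarrow> bool" where
  "weak_grad u g \<longleftrightarrow>
     (\<forall>phi dphi. test_fun phi dphi \<longrightarrow> (\<forall>i\<in>Basis.
        (LINT x:unit_ball|lebesgue. u x * (dphi x \<bullet> i)) =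
        - (LINT x:unit_ball|lebesgue. (g x \<bullet> i) * phi x)))"

definition H1 :: "('a::euclidean_space \<Rightarrow> real) \<Rightarrow> bool" where
  "H1 u \<longleftrightarrow> set_borel_measurable lebesgue unit_ball u \<and>
     set_integrable lebesgue unit_ball (\<lambda>x. (u x)\<^sup>2) \<and>
     (\<exists>g. set_borel_measurable lebesgue unit_ball g \<and>
          set_integrable lebesgue unit_ball (\<lambda>x. (norm (g x))\<^sup>2) \<and> weak_grad u g)"

definition grad :: "('a::euclidean_space \<Rightarrow> real) \<Rightarrow> 'a \<Rightarrow> 'a" where
  "grad u = (SOME g. set_borel_measurable lebesgue unit_ball g \<and>
          set_integrable lebesgue unit_ball (\<lambda>x. (norm (g x))\<^sup>2) \<and> weak_grad u g)"

definition H1r :: "('a::euclidean_space \<Rightarrow> real) \<Rightarrow> bool" where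
  "H1r u \<longleftrightarrow> H1 u \<and> (\<exists>w. \<forall>x\<in>unit_ball. u x = w (norm x))"

definition H1_inner :: "('a::euclidean_space \<Rightarrow> real) \<Rightarrow> ('a \<Rightarrow> real) \<Rightarrow> real" where
  "H1_inner u v = (LINT x:unit_ball|lebesgue. u x * v x + grad u x \<bullet> grad v x)"

definition Qf :: "(real \<Rightarrow> real) \<Rightarrow> ('a::euclidean_space \<Rightarrow> real) \<Rightarrow> ennreal" where
  "Qf V u = (\<integral>\<^sup>+ x\<in>unit_ball. ennreal ((norm (grad u x))\<^sup>2 + V (norm x) * (u x)\<^sup>2) \<partial>lebesgue)"

definition Kset :: "real \<Rightarrow> real \<Rightarrow> real \<Rightarrow> real \<Rightarrow> ('a::euclidean_space \<Rightarrow> real) set" where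
  "Kset R1 R2 c p = {u. H1r u \<and>
      set_integrable lebesgue unit_ball (\<lambda>x. \<bar>u x\<bar> powr (p + 1)) \<and>
      ((LINT x:unit_ball|lebesgue. \<bar>u x\<bar> powr (p + 1)) / measure lebesgue (unit_ball :: 'a set))
          powr (1 / (p + 1)) = 1 \<and>
      (AE x in lebesgue. x \<in> ball 0 R1 \<union> (unit_ball - ball 0 R2) \<longrightarrow> \<bar>u x\<bar> \<le> c)}"

definition Jval :: "(real \<Rightarrow> real) \<Rightarrow> real \<Rightarrow> real \<Rightarrow> real \<Rightarrow> real \<Rightarrow> 'a::euclidean_space itself \<Rightarrow> ennreal" where
  "Jval V R1 R2 c p _ = (INF u\<in>(Kset R1 R2 c p :: ('a \<Rightarrow> real) set). Qf V u)"

definition Linf_norm :: "'a::euclidean_space set \<Rightarrow> ('a \<Rightarrow> real) \<Rightarrow> ereal" where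
  "Linf_norm A u = esssup (restrict_space lebesgue A) (\<lambda>x. ereal \<bar>u x\<bar>)"

end

theory Submission
  imports Defs
begin
lemma mB: "0 < measure lebesgue (unit_ball :: 'a::euclidean_space set)"
  unfolding unit_ball_def
  by (simp add: content_ball)
lemma eB: "emeasure lebesgue (unit_ball :: 'a::euclidean_space set) < \<infinity>"
  unfolding unit_ball_def
  by (simp add: emeasure_ball)
lemma meas:
  assumes "H1 (u::'a::euclidean_space \<Rightarrow> real)" "A \<subseteq> unit_ball"
  shows "(\<lambda>x. ereal \<bar>u x\<bar>) \<in> borel_measurable (restrict_space lebesgue A)"
proof -
  have "set_borel_measurable lebesgue unit_ball u" using assms unfolding H1_def by auto
  then have "u \<in> borel_measurable (restrict_space lebesgue unit_ball)"
    unfolding set_borel_measurable_def unit_ball_def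
    by (subst borel_measurable_restrict_space_iff) auto
  then have "u \<in> borel_measurable (restrict_space lebesgue A)"
    using measurable_restrict_mono assms(2) by blast
  then show ?thesis by measurable
qed
lemma powr_eq1: assumes "(x::real) \<ge> 0" "a > 0" "x powr a = 1" shows "x = 1"
proof (cases "x = 0")
  case True then show ?thesis using assms by simp
next
  case False
  have "x = (x powr a) powr (1/a)" using assms(1,2) False by (simp add: powr_powr)
  also have "\<dots> = 1" using assms(3) by simp
  finally show ?thesis .
qed

lemma sets_ge:
  assumes "g \<in> borel_measurable (restrict_space lebesgue B)" "B \<in> sets lebesgue"
  shows "{x\<in>B. (C::real) \<le> g x} \<in> sets lebesgue"
proof -
  have "g -` {C..} \<inter> space (restrict_space lebesgue B) \<in> sets (restrict_space lebesgue B)"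
    by (rule measurable_sets[OF assms(1)]) auto
  then have "g -` {C..} \<inter> B \<in> sets lebesgue" using assms(2)
    by (subst (asm) sets_restrict_space_iff) (auto simp: space_restrict_space)
  moreover have "g -` {C..} \<inter> B = {x\<in>B. C \<le> g x}" by auto
  ultimately show ?thesis by simp
qed

lemma set_int_const:
  assumes "B \<in> sets lebesgue" "emeasure lebesgue B < \<infinity>"
  shows "set_integrable lebesgue B (\<lambda>_. (C::real))"
  unfolding set_integrable_def using assms
  by (intro integrable_scaleR_left integrable_real_indicator) auto

theorem lemma3p4:
  fixes V :: "real \<Rightarrow> real" and G :: "real \<Rightarrow> real \<Rightarrow> real"
    and F :: "real \<Rightarrow> real"
    and rbar R1 R2 c :: real
    and p :: "nat \<Rightarrow> real"
    and u :: "nat \<Rightarrow> 'a::euclidean_space \<Rightarrow> real"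
    and uinf :: "'a \<Rightarrow> real"
  assumes dim: "DIM('a) \<ge> 2"
    and V_smooth: "smooth_real_on {-1<..<1} V" and V_even: "\<forall>r. V (- r) = V r"
    and V_nonneg: "\<forall>r\<in>{0..<1}. V r \<ge> 0" and V_nonzero: "\<exists>r\<in>{0..<1}. V r \<noteq> 0"
    and G: "neumann_green DIM('a) V G"
    and F_def: "\<forall>r. F r = real DIM('a) * measure lebesgue (unit_ball :: 'a set) * r ^ (DIM('a) - 1) / G r r"
    and rbar: "0 < rbar" "rbar < 1"
    and rbar_locmin: "\<exists>e>0. \<forall>r\<in>{0<..<1}. \<bar>r - rbar\<bar> < e \<longrightarrow> F rbar \<le> F r"
    and R12: "0 < R1" "R1 < rbar" "rbar < R2" "R2 < 1"
    and rbar_min: "\<forall>r\<in>{R1..R2}. F rbar \<le> F r"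
    and c: "max (G R1 rbar / G rbar rbar) (G R2 rbar / G rbar rbar) < c" "c < 1"
    and p_gt1: "\<forall>k. p k > 1" and p_lim: "filterlim p at_top sequentially"
    and u_K: "\<forall>k. u k \<in> Kset R1 R2 c (p k)"
    and u_nonneg: "\<forall>k. AE x in lebesgue. x \<in> unit_ball \<longrightarrow> u k x \<ge> 0"
    and u_min: "\<forall>k. Qf V (u k) = Jval V R1 R2 c (p k) TYPE('a)"
    and uinf_H1r: "H1r uinf"
    and weak: "\<forall>v. H1 v \<longrightarrow> (\<lambda>k. H1_inner (u k) v) \<longlonglongrightarrow> H1_inner uinf v"
    and Lq: "\<forall>q\<ge>1. (\<lambda>k. \<integral>\<^sup>+ x\<in>unit_ball. ennreal (\<bar>u k x - uinf x\<bar> powr q) \<partial>lebesgue) \<longlonglongrightarrow> 0"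
    and Linf: "(\<lambda>k. Linf_norm (ball 0 R2 - ball 0 R1) (\<lambda>x. u k x - uinf x)) \<longlonglongrightarrow> 0"
  shows "Linf_norm (ball 0 R2 - ball 0 R1) uinf = 1"
proof -
  define B where "B = (unit_ball :: 'a set)"
  define A where "A = ball (0::'a) R2 - ball 0 R1"
  define M where "M = restrict_space lebesgue A"
  define D where "D = (\<lambda>k. Linf_norm A (\<lambda>x. u k x - uinf x))"
  define N where "N = Linf_norm A uinf"
  have AB: "A \<subseteq> B" using R12 unfolding A_def B_def unit_ball_def by auto
  have Bsets: "B \<in> sets lebesgue" unfolding B_def unit_ball_def by simp
  have Asets: "A \<in> sets lebesgue" unfolding A_def by (intro sets.Diff) auto
  have Asp: "A \<inter> space lebesgue \<in> sets lebesgue" using Asets by simp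
  have spM: "space M = A" unfolding M_def by (simp add: space_restrict_space)
  have mBpos: "0 < measure lebesgue B" unfolding B_def by (rule mB)
  have eBfin: "emeasure lebesgue B < \<infinity>" unfolding B_def by (rule eB)
  have DL: "D \<longlonglongrightarrow> 0" using Linf unfolding D_def A_def by simp
  have Kk: "\<And>k. H1r (u k) \<and>
      set_integrable lebesgue B (\<lambda>x. \<bar>u k x\<bar> powr (p k + 1)) \<and>
      ((LINT x:B|lebesgue. \<bar>u k x\<bar> powr (p k + 1)) / measure lebesgue B)
          powr (1 / (p k + 1)) = 1 \<and>
      (AE x in lebesgue. x \<in> ball 0 R1 \<union> (B - ball 0 R2) \<longrightarrow> \<bar>u k x\<bar> \<le> c)"
    using u_K unfolding Kset_def B_def by auto
  have int_eq: "(LINT x:B|lebesgue. \<bar>u k x\<bar> powr (p k + 1)) = measure lebesgue B" for k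
  proof -
    have "0 \<le> (LINT x:B|lebesgue. \<bar>u k x\<bar> powr (p k + 1))"
      unfolding set_lebesgue_integral_def
      by (rule Bochner_Integration.integral_nonneg) (simp add: indicator_def)
    then have x0: "0 \<le> (LINT x:B|lebesgue. \<bar>u k x\<bar> powr (p k + 1)) / measure lebesgue B"
      using mBpos by simp
    have q0: "0 < 1 / (p k + 1)" using p_gt1[rule_format, of k] by simp
    have "((LINT x:B|lebesgue. \<bar>u k x\<bar> powr (p k + 1)) / measure lebesgue B) powr (1 / (p k + 1)) = 1"
      using Kk[of k] by blast
    then have "(LINT x:B|lebesgue. \<bar>u k x\<bar> powr (p k + 1)) / measure lebesgue B = 1"
      by (rule powr_eq1[OF x0 q0])
    then show ?thesis using mBpos by (simp add: field_simps)
  qed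
  have AEout: "AE x in lebesgue. x \<in> B - A \<longrightarrow> \<bar>u k x\<bar> \<le> c" for k
  proof -
    have "AE x in lebesgue. x \<in> ball 0 R1 \<union> (B - ball 0 R2) \<longrightarrow> \<bar>u k x\<bar> \<le> c"
      using Kk[of k] by blast
    then show ?thesis by (rule eventually_mono) (auto simp: A_def)
  qed
  have measB: "(u k) \<in> borel_measurable (restrict_space lebesgue B)" for k
  proof -
    have "set_borel_measurable lebesgue B (u k)" using Kk[of k] unfolding H1r_def H1_def B_def by auto
    then show ?thesis
      unfolding set_borel_measurable_def B_def unit_ball_def
      by (subst borel_measurable_restrict_space_iff) auto
  qed
  have measinf: "(\<lambda>x. ereal \<bar>uinf x\<bar>) \<in> borel_measurable M"
    unfolding M_def using meas[of uinf A] uinf_H1r AB unfolding H1r_def B_def by auto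
  have AEN: "AE x in M. ereal \<bar>uinf x\<bar> \<le> N"
    unfolding N_def Linf_norm_def M_def by (rule esssup_AE)
  have AED: "AE x in M. ereal \<bar>u k x - uinf x\<bar> \<le> D k" for k
    unfolding D_def Linf_norm_def M_def by (rule esssup_AE)
  have lower: "1 \<le> N"
  proof (rule ccontr)
    assume "\<not> 1 \<le> N"
    then have "N < 1" by simp
    from ereal_dense2[OF this] obtain r :: real where r0: "N < ereal r" "ereal r < 1" by blast
    have r: "N < ereal r" "r < 1" using r0 by auto
    define \<delta> where "\<delta> = (1 - r) / 2"
    have "\<delta> > 0" using r by (simp add: \<delta>_def)
    then have "eventually (\<lambda>k. D k < ereal \<delta>) sequentially"
      using DL by (intro order_tendstoD(2)) (auto simp: zero_ereal_def)
    then obtain k0 where "\<forall>n\<ge>k0. D n < ereal \<delta>" unfolding eventually_sequentially by blast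
    then obtain k where k: "D k < ereal \<delta>" by blast
    have "AE x in M. \<bar>u k x\<bar> \<le> r + \<delta>"
      using AEN AED[of k]
    proof eventually_elim
      case (elim x)
      have "\<bar>uinf x\<bar> < r" using elim(1) r(1) using order.strict_trans1 by fastforce
      moreover have "\<bar>u k x - uinf x\<bar> < \<delta>" using elim(2) k using order.strict_trans1 by fastforce
      ultimately show ?case by linarith
    qed
    then have AEin: "AE x in lebesgue. x \<in> A \<longrightarrow> \<bar>u k x\<bar> \<le> r + \<delta>"
      unfolding M_def by (subst (asm) AE_restrict_space_iff[OF Asp])
    define m where "m = max 0 (max c (r + \<delta>))"
    have m: "0 \<le> m" "m < 1" using r c \<open>\<delta> > 0\<close> unfolding m_def \<delta>_def by (auto simp: field_simps)
    have q: "p k + 1 > 0" using p_gt1[rule_format, of k] by simp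
    have "AE x in lebesgue. x \<in> B \<longrightarrow> \<bar>u k x\<bar> powr (p k + 1) \<le> m powr (p k + 1)"
      using AEin AEout[of k]
    proof eventually_elim
      case (elim x)
      show ?case
      proof
        assume "x \<in> B"
        then have "\<bar>u k x\<bar> \<le> m" using elim unfolding m_def by auto
        then show "\<bar>u k x\<bar> powr (p k + 1) \<le> m powr (p k + 1)"
          using q by (intro powr_mono2) auto
      qed
    qed
    then have "(LINT x:B|lebesgue. \<bar>u k x\<bar> powr (p k + 1)) \<le> (LINT x:B|lebesgue. m powr (p k + 1))"
      using Kk[of k] set_int_const[OF Bsets eBfin]
      by (intro set_integral_mono_AE) auto
    also have "\<dots> = measure lebesgue B * m powr (p k + 1)"
      using set_integral_const[OF Bsets, of "m powr (p k + 1)"] eBfin by simp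
    also have "\<dots> < measure lebesgue B"
    proof -
      have "m powr (p k + 1) < 1"
      proof (cases "m = 0")
        case True then show ?thesis by simp
      next
        case False then show ?thesis using m q powr_less_mono2[of "p k + 1" m 1] by simp
      qed
      then show ?thesis using mBpos by simp
    qed
    finally show False using int_eq[of k] by simp
  qed
  have upper: "N \<le> 1"
  proof (rule ccontr)
    assume "\<not> N \<le> 1"
    then have "1 < N" by simp
    from ereal_dense2[OF this] obtain s :: real where s0: "1 < ereal s" "ereal s < N" by blast
    have s: "1 < s" "ereal s < N" using s0 by auto
    define E where "E = {x\<in>A. s < \<bar>uinf x\<bar>}"
    have "emeasure M {x\<in>space M. ereal s < ereal \<bar>uinf x\<bar>} > 0"
      using esssup_pos_measure[OF measinf] s(2) unfolding N_def Linf_norm_def M_def by blast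
    then have "emeasure M E > 0" unfolding E_def spM by simp
    moreover have "emeasure M E = emeasure lebesgue E"
      unfolding M_def using Asp by (intro emeasure_restrict_space) (auto simp: E_def)
    ultimately have eEpos: "emeasure lebesgue E > 0" by simp
    have "emeasure lebesgue E \<le> emeasure lebesgue B"
      using AB Bsets by (intro emeasure_mono_AE) (auto simp: E_def)
    then have "emeasure lebesgue E < top" using eBfin by (simp add: order.strict_trans1)
    then have eEfin: "emeasure lebesgue E \<noteq> top" by simp
    define mE where "mE = measure lebesgue E"
    have eEm: "emeasure lebesgue E = ennreal mE"
      unfolding mE_def using eEfin by (rule emeasure_eq_ennreal_measure)
    have mEpos: "mE > 0" using eEpos eEm by simp
    define t where "t = (1 + s) / 2"
    have t: "1 < t" "t < s" using s by (auto simp: t_def)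
    have lnt: "ln t > 0" using t by simp
    define K where "K = measure lebesgue B / (mE * ln t)"
    have "eventually (\<lambda>k. D k < ereal (s - t)) sequentially"
      using DL t by (intro order_tendstoD(2)) (auto simp: zero_ereal_def)
    moreover have "eventually (\<lambda>k. p k > K) sequentially"
      using p_lim by (simp add: filterlim_at_top_dense)
    ultimately have "eventually (\<lambda>k. D k < ereal (s - t) \<and> p k > K) sequentially"
      by (rule eventually_conj)
    then obtain k0 where "\<forall>n\<ge>k0. D n < ereal (s - t) \<and> p n > K" unfolding eventually_sequentially by blast
    then obtain k where k: "D k < ereal (s - t)" "p k > K" by blast
    define q where "q = p k + 1"
    have q: "q > 0" using p_gt1[rule_format, of k] by (simp add: q_def)
    have "AE x in M. x \<in> E \<longrightarrow> t \<le> \<bar>u k x\<bar>"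
      using AED[of k]
    proof eventually_elim
      case (elim x)
      have "\<bar>u k x - uinf x\<bar> < s - t" using elim k using order.strict_trans1 by fastforce
      then show ?case unfolding E_def by auto
    qed
    then have "AE x in lebesgue. x \<in> A \<longrightarrow> x \<in> E \<longrightarrow> t \<le> \<bar>u k x\<bar>"
      unfolding M_def by (subst (asm) AE_restrict_space_iff[OF Asp])
    then have AE2: "AE x in lebesgue. x \<in> E \<longrightarrow> x \<in> {x\<in>B. t powr q \<le> \<bar>u k x\<bar> powr q}"
    proof (rule eventually_mono)
      fix x assume h: "x \<in> A \<longrightarrow> x \<in> E \<longrightarrow> t \<le> \<bar>u k x\<bar>"
      show "x \<in> E \<longrightarrow> x \<in> {x\<in>B. t powr q \<le> \<bar>u k x\<bar> powr q}"
      proof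
        assume "x \<in> E"
        then have "x \<in> A" "t \<le> \<bar>u k x\<bar>" using h unfolding E_def by auto
        then show "x \<in> {x\<in>B. t powr q \<le> \<bar>u k x\<bar> powr q}"
          using AB t q by (auto intro!: powr_mono2)
      qed
    qed
    have mf: "(\<lambda>x. \<bar>u k x\<bar> powr q) \<in> borel_measurable (restrict_space lebesgue B)"
      using measB[of k] by measurable
    have "emeasure lebesgue E \<le> emeasure lebesgue {x\<in>B. t powr q \<le> \<bar>u k x\<bar> powr q}"
      by (rule emeasure_mono_AE[OF AE2 sets_ge[OF mf Bsets]])
    also have "\<dots> \<le> (1 / t powr q) * (LINT x:B|lebesgue. \<bar>u k x\<bar> powr q)"
      using Kk[of k] Bsets t unfolding q_def
      by (intro integral_Markov_inequality') auto
    also have "\<dots> = (1 / t powr q) * measure lebesgue B"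
      using int_eq[of k] unfolding q_def by simp
    finally have "mE \<le> (1 / t powr q) * measure lebesgue B"
      using eEm mBpos t by (simp add: ennreal_le_iff)
    then have le: "t powr q * mE \<le> measure lebesgue B"
      using t by (simp add: field_simps)
    have "t powr q = exp (q * ln t)" using t by (simp add: powr_def)
    also have "\<dots> \<ge> 1 + q * ln t" by (rule exp_ge_add_one_self)
    finally have "t powr q > p k * ln t" using lnt unfolding q_def by (smt (verit) mult_pos_pos distrib_right)
    moreover have "p k * ln t > measure lebesgue B / mE"
      using k(2) lnt mEpos unfolding K_def by (simp add: field_simps)
    ultimately have "t powr q > measure lebesgue B / mE" by simp
    then have "t powr q * mE > measure lebesgue B" using mEpos by (simp add: field_simps)
    then show False using le by simp
  qed
  show ?thesis using lower upper unfolding N_def A_def by simp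
qed

end
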